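(* Let $\alpha>1$, $d\in\mathbb N$, $1\ge\gamma_1\ge\dots\ge\gamma_d>0$, let $\boldsymbol x_1,\dots,\boldsymbol x_N\in[0,1]^d$, $c_1,\dots,c_N\in\mathbb R$, and let $K\subset\mathbb Z^d$ be finite. If $g\in H_{\alpha,\boldsymbol\gamma,d}$, then $g\phi_K\in H_{\alpha-\frac12-\delta,\boldsymbol\gamma,d}$ for every $\delta\in(0,\alpha-1)$, and $$\|g\phi_K\|_{H_{\alpha-\frac12-\delta,\boldsymbol\gamma,d}}\le\|g\|_{H_{\alpha,\boldsymbol\gamma,d}}\Big(\sum_{\boldsymbol k\in K}r_\alpha(\boldsymbol\gamma,\boldsymbol k)\Big)^{1/2}c_{\alpha,\boldsymbol\gamma,d}\,\zeta_{\delta,d}\,\overline\mu_N.$$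
   Context: For $\beta>0$, $\gamma>0$, $h\in\mathbb Z$: $r_\beta(\gamma,h)=\max(|h|^{2\beta}/\gamma,1)$, $r_\beta(\boldsymbol\gamma,\boldsymbol k)=\prod_{j=1}^d r_\beta(\gamma_j,k_j)$. $\omega_{\boldsymbol k}(\boldsymbol x)=\exp(2\pi i\,\boldsymbol k\cdot\boldsymbol x)$, $\widehat f_{\boldsymbol k}=\int_{[0,1]^d}f\,\overline{\omega_{\boldsymbol k}}$. Weighted Korobov space (for $\beta>1/2$): $H_{\beta,\boldsymbol\gamma,d}=\{f\in L_2([0,1]^d):\|f\|_{H_{\beta,\boldsymbol\gamma,d}}=(\sum_{\boldsymbol k\in\mathbb Z^d}r_\beta(\boldsymbol\gamma,\boldsymbol k)|\widehat f_{\boldsymbol k}|^2)^{1/2}<\infty\}$. Define $\phi_K(\boldsymbol x)=\sum_{\boldsymbol k\in K}\check\phi_{\boldsymbol k}\overline{\omega_{\boldsymbol k}(\boldsymbol x)}$ with $\check\phi_{\boldsymbol k}=\frac1N\sum_{n=1}^Nc_n\omega_{\boldsymbol k}(\boldsymbol x_n)$. Constants: $\overline\mu_N=\frac1N\sum_{n=1}^N|c_n|$, $c_{\alpha,\boldsymbol\gamma,d}=\sqrt{\prod_{j=1}^d\max(1,2^{2\alpha}\gamma_j)}$, $\zeta_{\delta,d}=[1+2\zeta(1+2\delta)]^{d/2}$ with $\zeta$ the Riemann zeta function. *)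

theory Defs
  imports "HOL-Analysis.Analysis"
begin

text \<open>Dimension d = CARD('d); vectors in R^d are real^'d, frequencies in Z^d are int^'d.
  The index type carries a linear order so that the monotonicity of the weights can be stated.\<close>

definition r1 :: "real \<Rightarrow> real \<Rightarrow> int \<Rightarrow> real" where
  "r1 \<beta> \<gamma> h = max ((real_of_int \<bar>h\<bar>) powr (2 * \<beta>) / \<gamma>) 1"

definition rw :: "real \<Rightarrow> real^'d \<Rightarrow> int^'d \<Rightarrow> real" where
  "rw \<beta> \<gamma> k = (\<Prod>j\<in>UNIV. r1 \<beta> (\<gamma>$j) (k$j))"

definition omega :: "int^'d \<Rightarrow> real^'d \<Rightarrow> complex" where
  "omega k x = exp (2 * pi * \<i> * complex_of_real (\<Sum>j\<in>UNIV. real_of_int (k$j) * x$j))"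

definition unit_cube :: "(real^'d) set" where
  "unit_cube = cbox 0 One"

definition fourier_coeff :: "(real^'d \<Rightarrow> complex) \<Rightarrow> int^'d \<Rightarrow> complex" where
  "fourier_coeff f k = (LINT x:unit_cube|lborel. f x * cnj (omega k x))"

definition L2_cube :: "(real^'d \<Rightarrow> complex) set" where
  "L2_cube = {f. set_borel_measurable lborel unit_cube f \<and>
                 set_integrable lborel unit_cube (\<lambda>x. (cmod (f x))^2)}"

definition korobov_space :: "real \<Rightarrow> real^'d \<Rightarrow> (real^'d \<Rightarrow> complex) set" where
  "korobov_space \<beta> \<gamma> = {f. f \<in> L2_cube \<and>
      (\<lambda>k. rw \<beta> \<gamma> k * (cmod (fourier_coeff f k))^2) summable_on UNIV}"

definition korobov_norm :: "real \<Rightarrow> real^'d \<Rightarrow> (real^'d \<Rightarrow> complex) \<Rightarrow> real" where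
  "korobov_norm \<beta> \<gamma> f = sqrt (\<Sum>\<^sub>\<infinity>k. rw \<beta> \<gamma> k * (cmod (fourier_coeff f k))^2)"

definition phi_check :: "nat \<Rightarrow> (nat \<Rightarrow> real^'d) \<Rightarrow> (nat \<Rightarrow> real) \<Rightarrow> int^'d \<Rightarrow> complex" where
  "phi_check N xs c k = (1 / of_nat N) * (\<Sum>n=1..N. complex_of_real (c n) * omega k (xs n))"

definition phiK :: "(int^'d) set \<Rightarrow> nat \<Rightarrow> (nat \<Rightarrow> real^'d) \<Rightarrow> (nat \<Rightarrow> real) \<Rightarrow> real^'d \<Rightarrow> complex" where
  "phiK K N xs c x = (\<Sum>k\<in>K. phi_check N xs c k * cnj (omega k x))"

definition mu_bar :: "nat \<Rightarrow> (nat \<Rightarrow> real) \<Rightarrow> real" where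
  "mu_bar N c = (1 / real N) * (\<Sum>n=1..N. \<bar>c n\<bar>)"

definition c_const :: "real \<Rightarrow> real^'d \<Rightarrow> real" where
  "c_const \<alpha> \<gamma> = sqrt (\<Prod>j\<in>UNIV. max 1 (2 powr (2 * \<alpha>) * \<gamma>$j))"

definition rzeta :: "real \<Rightarrow> real" where
  "rzeta s = (\<Sum>n. 1 / (real (Suc n)) powr s)"

definition zeta_const :: "real \<Rightarrow> nat \<Rightarrow> real" where
  "zeta_const \<delta> d = (1 + 2 * rzeta (1 + 2 * \<delta>)) powr (real d / 2)"

end

theory Submission
  imports Defs
begin


definition rho :: "real \<Rightarrow> int \<Rightarrow> real" where
  "rho s h = (if h = 0 then 1 else (real_of_int \<bar>h\<bar>) powr (- s))"

lemma rzeta_has_sum: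
  assumes "s > 1"
  shows "((\<lambda>n. 1 / (real (Suc n)) powr s) has_sum rzeta s) (UNIV :: nat set)"
proof -
  have sm: "summable (\<lambda>n. 1 / (real (Suc n)) powr s)"
  proof -
    have "summable (\<lambda>n. (real n) powr (-s))" using assms by (simp add: summable_real_powr_iff)
    then have "summable (\<lambda>n. (real (Suc n)) powr (-s))" by (subst summable_Suc_iff)
    then show ?thesis by (simp add: powr_minus divide_inverse)
  qed
  have "(\<lambda>n. 1 / (real (Suc n)) powr s) sums rzeta s"
    unfolding rzeta_def using sm by (rule summable_sums)
  moreover have "summable (\<lambda>n. norm (1 / (real (Suc n)) powr s))" using sm by simp
  ultimately show ?thesis by (intro norm_summable_imp_has_sum) auto
qed

lemma rho_has_sum:
  assumes "s > 1"
  shows "(rho s has_sum (1 + 2 * rzeta s)) (UNIV :: int set)"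
proof -
  have P: "(rho s has_sum rzeta s) {0<..}"
    using rzeta_has_sum[OF assms]
    by (subst has_sum_reindex_bij_witness[where j = "\<lambda>h. nat h - 1" and i = "\<lambda>n. int (Suc n)"
        and T = "UNIV::nat set" and h = "\<lambda>n. 1 / (real (Suc n)) powr s" and s' = "rzeta s"])
       (auto simp: rho_def powr_minus divide_inverse)
  have M: "(rho s has_sum rzeta s) {..<0}"
    using rzeta_has_sum[OF assms]
    by (subst has_sum_reindex_bij_witness[where j = "\<lambda>h. nat (-h) - 1" and i = "\<lambda>n. - int (Suc n)"
        and T = "UNIV::nat set" and h = "\<lambda>n. 1 / (real (Suc n)) powr s" and s' = "rzeta s"])
       (auto simp: rho_def powr_minus divide_inverse)
  have "(rho s has_sum (rzeta s + rzeta s)) ({0<..} \<union> {..<0})"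
    by (rule has_sum_Un_disjoint[OF P M]) auto
  then have "(rho s has_sum (rho s 0 + (rzeta s + rzeta s))) (insert 0 ({0<..} \<union> {..<0}))"
    by (intro has_sum_insert) auto
  moreover have "insert 0 ({0<..} \<union> {..<0}) = (UNIV :: int set)" by auto
  ultimately show ?thesis by (simp add: rho_def)
qed




lemma rho_nonneg: "rho s h \<ge> 0" by (simp add: rho_def)

lemma w_has_sum:
  assumes "s > 1"
  shows "((\<lambda>m::int^'d::finite. \<Prod>j\<in>UNIV. rho s (m$j)) has_sum (1 + 2 * rzeta s) ^ CARD('d)) UNIV"
proof -
  have hs: "(rho s has_sum (1 + 2 * rzeta s)) UNIV" by (rule rho_has_sum[OF assms])
  have z: "rzeta s \<ge> 0" using hs has_sum_nonneg[OF hs] rho_nonneg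
    by (metis has_sum_infsum infsumI infsum_nonneg rzeta_has_sum[OF assms] le_divide_eq_1_pos less_eq_real_def linorder_not_le zero_less_one divide_nonneg_nonneg powr_ge_zero of_nat_0_le_iff)
  have abs: "(\<lambda>x. norm (rho s x)) summable_on UNIV"
    using hs by (simp add: rho_nonneg has_sum_imp_summable)
  have eq: "infsum (\<lambda>g::'d\<Rightarrow>int. \<Prod>x\<in>UNIV. rho s (g x)) (PiE UNIV (\<lambda>_. UNIV))
      = (\<Prod>x\<in>(UNIV::'d set). infsum (rho s) UNIV)"
    by (rule infsum_prod_PiE_abs) (use abs in auto)
  have pos: "(\<Prod>x\<in>(UNIV::'d set). infsum (rho s) UNIV) = (1 + 2 * rzeta s) ^ CARD('d)"
    using infsumI[OF hs] by simp
  have "(1 + 2 * rzeta s) ^ CARD('d) > 0" using z by simp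
  then have sm: "(\<lambda>g::'d\<Rightarrow>int. \<Prod>x\<in>UNIV. rho s (g x)) summable_on UNIV"
    using eq pos infsum_not_exists by fastforce
  have H: "((\<lambda>g::'d\<Rightarrow>int. \<Prod>x\<in>UNIV. rho s (g x)) has_sum (1 + 2 * rzeta s) ^ CARD('d)) UNIV"
    using has_sum_infsum[OF sm] eq pos by simp
  show ?thesis
    by (subst has_sum_reindex_bij_witness[where j = vec_nth and i = vec_lambda and T = UNIV
          and h = "\<lambda>g::'d\<Rightarrow>int. \<Prod>x\<in>UNIV. rho s (g x)" and s' = "(1 + 2 * rzeta s) ^ CARD('d)"])
       (use H in auto)
qed




lemma r1_ge1: "r1 a g h \<ge> 1" by (simp add: r1_def)

lemma r1_submult:
  assumes "\<alpha> > 0" "\<gamma> > 0"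
  shows "r1 \<alpha> \<gamma> m \<le> max 1 (2 powr (2*\<alpha>) * \<gamma>) * r1 \<alpha> \<gamma> (m+k) * r1 \<alpha> \<gamma> k"
proof -
  define M where "M = max 1 (2 powr (2*\<alpha>) * \<gamma>)"
  have M1: "M \<ge> 1" by (simp add: M_def)
  have R1: "1 \<le> r1 \<alpha> \<gamma> (m+k)" "1 \<le> r1 \<alpha> \<gamma> k" by (simp_all add: r1_ge1)
  have base: "1 \<le> M * r1 \<alpha> \<gamma> (m+k) * r1 \<alpha> \<gamma> k"
    using M1 R1 by (metis mult_le_cancel_left1 mult_mono' order_trans zero_le_one less_le_not_le le_numeral_extra(1) mult.commute mult_1 linorder_not_le)
  show ?thesis
  proof (cases "real_of_int \<bar>m\<bar> powr (2*\<alpha>) / \<gamma> \<le> 1")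
    case True
    then have "r1 \<alpha> \<gamma> m = 1" by (simp add: r1_def)
    then show ?thesis using base M_def by simp
  next
    case False
    then have rm: "r1 \<alpha> \<gamma> m = real_of_int \<bar>m\<bar> powr (2*\<alpha>) / \<gamma>" by (simp add: r1_def)
    show ?thesis
    proof (cases "k = 0")
      case True
      have "r1 \<alpha> \<gamma> m \<le> 1 * r1 \<alpha> \<gamma> (m+k) * 1" using True by simp
      also have "\<dots> \<le> M * r1 \<alpha> \<gamma> (m+k) * r1 \<alpha> \<gamma> k"
        by (intro mult_mono) (use M1 R1 in auto)
      finally show ?thesis by (simp add: M_def)
    next
      case k0: False
      show ?thesis
      proof (cases "m + k = 0")
        case True
        then have "\<bar>m\<bar> = \<bar>k\<bar>" by auto
        then have "r1 \<alpha> \<gamma> m = r1 \<alpha> \<gamma> k" by (simp add: r1_def)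
        then have "r1 \<alpha> \<gamma> m \<le> 1 * 1 * r1 \<alpha> \<gamma> k" by simp
        also have "\<dots> \<le> M * r1 \<alpha> \<gamma> (m+k) * r1 \<alpha> \<gamma> k"
          by (intro mult_mono) (use M1 R1 in auto)
        finally show ?thesis by (simp add: M_def)
      next
        case mk0: False
        define a where "a = real_of_int \<bar>m+k\<bar>"
        define b where "b = real_of_int \<bar>k\<bar>"
        have a1: "a \<ge> 1" using mk0 by (simp add: a_def)
        have b1: "b \<ge> 1" using k0 by (simp add: b_def)
        have "real_of_int \<bar>m\<bar> \<le> a + b" unfolding a_def b_def by linarith
        also have "\<dots> \<le> 2 * (a * b)"
          using a1 b1 by (smt (verit) mult_le_cancel_left1 mult_le_cancel_right1)
        finally have mle: "real_of_int \<bar>m\<bar> \<le> 2 * (a * b)" .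
        have "real_of_int \<bar>m\<bar> powr (2*\<alpha>) \<le> (2 * (a*b)) powr (2*\<alpha>)"
          by (rule powr_mono2) (use mle assms in auto)
        also have "\<dots> = 2 powr (2*\<alpha>) * (a powr (2*\<alpha>) * b powr (2*\<alpha>))"
          using a1 b1 by (simp add: powr_mult)
        finally have "r1 \<alpha> \<gamma> m \<le> 2 powr (2*\<alpha>) * (a powr (2*\<alpha>) * b powr (2*\<alpha>)) / \<gamma>"
          using rm assms by (simp add: divide_right_mono)
        also have "\<dots> = (2 powr (2*\<alpha>) * \<gamma>) * (a powr (2*\<alpha>) / \<gamma>) * (b powr (2*\<alpha>) / \<gamma>)"
          using assms by (simp add: field_simps)
        also have "\<dots> \<le> M * r1 \<alpha> \<gamma> (m+k) * r1 \<alpha> \<gamma> k"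
          unfolding M_def r1_def a_def[symmetric] b_def[symmetric]
          by (intro mult_mono) (use assms in auto)
        finally show ?thesis by (simp add: M_def)
      qed
    qed
  qed
qed

lemma div_ge_self: "y \<ge> 0 \<Longrightarrow> 0 < (g::real) \<Longrightarrow> g \<le> 1 \<Longrightarrow> y \<le> y / g"
  by (simp add: le_divide_eq mult_left_le)

lemma r1_beta:
  assumes "\<alpha> > 1" "0 < \<delta>" "\<delta> < \<alpha> - 1" "0 < \<gamma>" "\<gamma> \<le> 1"
  shows "r1 (\<alpha> - 1/2 - \<delta>) \<gamma> h \<le> r1 \<alpha> \<gamma> h * rho (1 + 2*\<delta>) h"
proof (cases "h = 0")
  case True
  then show ?thesis using assms by (simp add: r1_def rho_def)
next
  case False
  define x where "x = real_of_int \<bar>h\<bar>"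
  have x1: "x \<ge> 1" using False by (simp add: x_def)
  have "1 \<le> x powr (2*(\<alpha> - 1/2 - \<delta>))" using x1 assms by (intro ge_one_powr_ge_zero) auto
  also have "\<dots> \<le> x powr (2*(\<alpha> - 1/2 - \<delta>)) / \<gamma>"
    using div_ge_self[of "x powr (2*(\<alpha> - 1/2 - \<delta>))" \<gamma>] assms by simp
  finally have "r1 (\<alpha> - 1/2 - \<delta>) \<gamma> h = x powr (2*(\<alpha> - 1/2 - \<delta>)) / \<gamma>"
    by (simp add: r1_def x_def)
  also have "\<dots> = (x powr (2*\<alpha>) / \<gamma>) * x powr (-(1 + 2*\<delta>))"
  proof -
    have e: "2*(\<alpha> - 1/2 - \<delta>) = 2*\<alpha> + (-(1 + 2*\<delta>))" by simp
    show ?thesis unfolding e powr_add by simp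
  qed
  also have "\<dots> \<le> r1 \<alpha> \<gamma> h * rho (1 + 2*\<delta>) h"
  proof -
    have "rho (1 + 2*\<delta>) h = x powr (-(1 + 2*\<delta>))" using False by (simp add: rho_def x_def)
    moreover have "x powr (2*\<alpha>) / \<gamma> \<le> r1 \<alpha> \<gamma> h" by (simp add: r1_def x_def)
    ultimately show ?thesis by (metis mult_right_mono powr_ge_zero)
  qed
  finally show ?thesis .
qed




lemma omega_add: "omega (m + k) x = omega m x * omega k x"
proof -
  have "(\<Sum>j\<in>UNIV. real_of_int ((m + k)$j) * x$j)
      = (\<Sum>j\<in>UNIV. real_of_int (m$j) * x$j) + (\<Sum>j\<in>UNIV. real_of_int (k$j) * x$j)"
    by (simp add: distrib_right sum.distrib)
  then show ?thesis unfolding omega_def by (simp add: distrib_left exp_add[symmetric])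
qed

lemma norm_omega[simp]: "norm (omega k x) = 1"
proof -
  have "omega k x = exp (\<i> * complex_of_real (2 * pi * (\<Sum>j\<in>UNIV. real_of_int (k$j) * x$j)))"
    unfolding omega_def by (simp add: mult_ac)
  then show ?thesis by simp
qed

lemma cont_omega: "continuous_on UNIV (omega k)"
  unfolding omega_def by (intro continuous_intros)

lemma cont_phiK: "continuous_on UNIV (phiK K N xs c)"
  unfolding phiK_def[abs_def] by (intro continuous_intros cont_omega)

lemma meas_omega[measurable]: "omega k \<in> borel_measurable borel"
  by (rule borel_measurable_continuous_onI[OF cont_omega])

lemma meas_phiK[measurable]: "phiK K N xs c \<in> borel_measurable borel"
  by (rule borel_measurable_continuous_onI[OF cont_phiK])

lemma cube_sets[measurable]: "unit_cube \<in> sets lborel"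
  by (simp add: unit_cube_def)

lemma cube_fin: "emeasure lborel unit_cube < \<infinity>"
  by (simp add: unit_cube_def emeasure_lborel_cbox_finite)

lemma L2_integrable:
  assumes "g \<in> L2_cube"
  shows "integrable lborel (\<lambda>x. indicator unit_cube x *\<^sub>R g x)"
proof -
  have m: "(\<lambda>x. indicator unit_cube x *\<^sub>R g x) \<in> borel_measurable lborel"
    using assms by (simp add: L2_cube_def set_borel_measurable_def)
  have i2: "integrable lborel (\<lambda>x. indicator unit_cube x *\<^sub>R (cmod (g x))^2)"
    using assms by (simp add: L2_cube_def set_integrable_def)
  have i1: "integrable lborel (\<lambda>x. indicator unit_cube x :: real)"
    using cube_fin cube_sets by (intro integrable_real_indicator) auto
  have i: "integrable lborel (\<lambda>x. indicator unit_cube x + indicator unit_cube x *\<^sub>R (cmod (g x))^2 :: real)"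
    using i1 i2 by (rule Bochner_Integration.integrable_add)
  show ?thesis
  proof (rule Bochner_Integration.integrable_bound[OF i m], rule AE_I2)
    fix x
    have "cmod (g x) \<le> 1 + (cmod (g x))^2"
      by (smt (verit) power2_eq_square mult_le_cancel_left1 norm_ge_zero zero_le_power2)
    then show "norm (indicator unit_cube x *\<^sub>R g x) \<le>
      norm (indicator unit_cube x + indicator unit_cube x *\<^sub>R (cmod (g x))^2 :: real)"
      by (auto simp: indicator_def)
  qed
qed

lemma L2_integrable_mult:
  assumes "g \<in> L2_cube" and h: "h \<in> borel_measurable borel" and B: "\<And>x. norm (h x) \<le> B"
  shows "integrable lborel (\<lambda>x. indicator unit_cube x *\<^sub>R (g x * h x))"
proof -
  have m0: "(\<lambda>x. indicator unit_cube x *\<^sub>R g x) \<in> borel_measurable lborel"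
    using assms by (simp add: L2_cube_def set_borel_measurable_def)
  have hm: "h \<in> borel_measurable lborel" using h by simp
  have m: "(\<lambda>x. indicator unit_cube x *\<^sub>R (g x * h x)) \<in> borel_measurable lborel"
  proof -
    have "(\<lambda>x. (indicator unit_cube x *\<^sub>R g x) * h x) \<in> borel_measurable lborel"
      using m0 hm by measurable
    then show ?thesis by (simp add: mult.assoc)
  qed
  have i: "integrable lborel (\<lambda>x. B * norm (indicator unit_cube x *\<^sub>R g x))"
  proof -
    have "integrable lborel (\<lambda>x. norm (indicator unit_cube x *\<^sub>R g x))"
      using L2_integrable[OF assms(1)] by (rule integrable_norm)
    then show ?thesis by (rule integrable_mult_right)
  qed
  show ?thesis
  proof (rule Bochner_Integration.integrable_bound[OF i m], rule AE_I2)
    fix x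
    have "norm (g x * h x) \<le> norm (g x) * B" unfolding norm_mult
      by (rule mult_left_mono[OF B]) simp
    then show "norm (indicator unit_cube x *\<^sub>R (g x * h x)) \<le> norm (B * norm (indicator unit_cube x *\<^sub>R g x))"
      using B[of x] by (auto simp: indicator_def mult.commute)
  qed
qed




lemma meas_mult:
  assumes "g \<in> L2_cube" and h: "h \<in> borel_measurable borel"
  shows "(\<lambda>x. indicator unit_cube x *\<^sub>R (g x * h x)) \<in> borel_measurable lborel"
proof -
  have m0: "(\<lambda>x. indicator unit_cube x *\<^sub>R g x) \<in> borel_measurable lborel"
    using assms by (simp add: L2_cube_def set_borel_measurable_def)
  have hm: "h \<in> borel_measurable lborel" using h by simp
  have "(\<lambda>x. (indicator unit_cube x *\<^sub>R g x) * h x) \<in> borel_measurable lborel"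
    using m0 hm by measurable
  then show ?thesis by (simp add: mult.assoc)
qed

lemma norm_phiK: "norm (phiK K N xs c x) \<le> (\<Sum>k\<in>K. norm (phi_check N xs c k))"
  unfolding phiK_def by (rule order_trans[OF norm_sum]) (simp add: norm_mult)

lemma fourier_prod:
  assumes g: "g \<in> L2_cube" and K: "finite K"
  shows "fourier_coeff (\<lambda>x. g x * phiK K N xs c x) m
       = (\<Sum>k\<in>K. phi_check N xs c k * fourier_coeff g (m+k))"
proof -
  have pw: "indicator unit_cube x *\<^sub>R (g x * phiK K N xs c x * cnj (omega m x))
     = (\<Sum>k\<in>K. phi_check N xs c k * (indicator unit_cube x *\<^sub>R (g x * cnj (omega (m+k) x))))" for x
    unfolding phiK_def omega_add
    by (simp add: sum_distrib_left sum_distrib_right scaleR_sum_right mult_ac)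
  have int: "integrable lborel (\<lambda>x. indicator unit_cube x *\<^sub>R (g x * cnj (omega (m+k) x)))" for k
  proof (rule L2_integrable_mult[OF g, where B = 1])
    show "(\<lambda>x. cnj (omega (m + k) x)) \<in> borel_measurable borel"
      by (intro borel_measurable_continuous_onI continuous_intros cont_omega[THEN continuous_on_compose2]) auto
  qed auto
  have "fourier_coeff (\<lambda>x. g x * phiK K N xs c x) m
      = integral\<^sup>L lborel (\<lambda>x. \<Sum>k\<in>K. phi_check N xs c k * (indicator unit_cube x *\<^sub>R (g x * cnj (omega (m+k) x))))"
    unfolding fourier_coeff_def set_lebesgue_integral_def pw ..
  also have "\<dots> = (\<Sum>k\<in>K. integral\<^sup>L lborel (\<lambda>x. phi_check N xs c k * (indicator unit_cube x *\<^sub>R (g x * cnj (omega (m+k) x)))))"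
    by (rule Bochner_Integration.integral_sum[where f = "\<lambda>k x. phi_check N xs c k * (indicator unit_cube x *\<^sub>R (g x * cnj (omega (m+k) x)))"]) (rule Bochner_Integration.integrable_mult_right, rule int)
  also have "\<dots> = (\<Sum>k\<in>K. phi_check N xs c k * fourier_coeff g (m+k))"
    unfolding fourier_coeff_def set_lebesgue_integral_def
    by (intro sum.cong refl Bochner_Integration.integral_mult_right) (use int in auto)
  finally show ?thesis .
qed

lemma L2_prod:
  assumes g: "g \<in> L2_cube"
  shows "(\<lambda>x. g x * phiK K N xs c x) \<in> L2_cube"
proof -
  define B where "B = (\<Sum>k\<in>K. norm (phi_check N xs c k))"
  have B: "norm (phiK K N xs c x) \<le> B" for x unfolding B_def by (rule norm_phiK)
  have B0: "B \<ge> 0" unfolding B_def by (simp add: sum_nonneg)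
  have m: "(\<lambda>x. indicator unit_cube x *\<^sub>R (g x * phiK K N xs c x)) \<in> borel_measurable lborel"
    by (rule meas_mult[OF g]) simp
  have i2: "integrable lborel (\<lambda>x. indicator unit_cube x *\<^sub>R (cmod (g x))^2)"
    using g by (simp add: L2_cube_def set_integrable_def)
  have i: "integrable lborel (\<lambda>x. B^2 * (indicator unit_cube x *\<^sub>R (cmod (g x))^2))"
    using i2 by (rule integrable_mult_right)
  have eqm: "(\<lambda>x. indicator unit_cube x *\<^sub>R (cmod (g x * phiK K N xs c x))^2)
     = (\<lambda>x. (norm (indicator unit_cube x *\<^sub>R (g x * phiK K N xs c x)))^2)"
    by (auto simp: indicator_def fun_eq_iff)
  have m2: "(\<lambda>x. indicator unit_cube x *\<^sub>R (cmod (g x * phiK K N xs c x))^2) \<in> borel_measurable lborel"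
    unfolding eqm using m by measurable
  have "integrable lborel (\<lambda>x. indicator unit_cube x *\<^sub>R (cmod (g x * phiK K N xs c x))^2)"
  proof (rule Bochner_Integration.integrable_bound[OF i m2], rule AE_I2)
    fix x
    have "cmod (g x * phiK K N xs c x) \<le> cmod (g x) * B"
      unfolding norm_mult by (rule mult_left_mono[OF B]) simp
    then have "(cmod (g x * phiK K N xs c x))^2 \<le> (cmod (g x) * B)^2"
      by (rule power_mono) simp
    then show "norm (indicator unit_cube x *\<^sub>R (cmod (g x * phiK K N xs c x))^2)
        \<le> norm (B^2 * (indicator unit_cube x *\<^sub>R (cmod (g x))^2))"
      by (auto simp: indicator_def power_mult_distrib mult_ac)
  qed
  then show ?thesis
    using m by (simp add: L2_cube_def set_integrable_def set_borel_measurable_def)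
qed




lemma rw_pos: "rw a g k > 0"
  unfolding rw_def by (rule prod_pos) (use r1_ge1 in \<open>auto intro: less_le_trans[OF zero_less_one]\<close>)

lemma rw_submult:
  assumes "\<alpha> > 0" "\<And>j. \<gamma>$j > 0"
  shows "rw \<alpha> \<gamma> m \<le> (\<Prod>j\<in>UNIV. max 1 (2 powr (2*\<alpha>) * \<gamma>$j)) * rw \<alpha> \<gamma> (m+k) * rw \<alpha> \<gamma> k"
proof -
  have "rw \<alpha> \<gamma> m \<le> (\<Prod>j\<in>UNIV. max 1 (2 powr (2*\<alpha>) * \<gamma>$j) * r1 \<alpha> (\<gamma>$j) ((m+k)$j) * r1 \<alpha> (\<gamma>$j) (k$j))"
    unfolding rw_def
  proof (rule prod_mono)
    fix j :: 'a
    show "0 \<le> r1 \<alpha> (\<gamma>$j) (m$j) \<and> r1 \<alpha> (\<gamma>$j) (m$j) \<le> max 1 (2 powr (2*\<alpha>) * \<gamma>$j) * r1 \<alpha> (\<gamma>$j) ((m+k)$j) * r1 \<alpha> (\<gamma>$j) (k$j)"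
      using r1_submult[OF assms(1) assms(2)[of j], of "m$j" "k$j"] r1_ge1[of \<alpha> "\<gamma>$j" "m$j"] by simp
  qed
  also have "\<dots> = (\<Prod>j\<in>UNIV. max 1 (2 powr (2*\<alpha>) * \<gamma>$j)) * rw \<alpha> \<gamma> (m+k) * rw \<alpha> \<gamma> k"
    unfolding rw_def by (simp add: prod.distrib)
  finally show ?thesis .
qed

lemma rw_beta:
  assumes "\<alpha> > 1" "0 < \<delta>" "\<delta> < \<alpha> - 1" "\<And>j. 0 < \<gamma>$j \<and> \<gamma>$j \<le> 1"
  shows "rw (\<alpha> - 1/2 - \<delta>) \<gamma> m \<le> rw \<alpha> \<gamma> m * (\<Prod>j\<in>UNIV. rho (1 + 2*\<delta>) (m$j))"
  unfolding rw_def prod.distrib[symmetric]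
  by (rule prod_mono) (use r1_beta assms r1_ge1 in \<open>auto intro: order_trans[OF zero_le_one]\<close>)

lemma phi_check_bound: "norm (phi_check N xs c k) \<le> mu_bar N c"
proof -
  have "norm (\<Sum>n=1..N. complex_of_real (c n) * omega k (xs n)) \<le> (\<Sum>n=1..N. \<bar>c n\<bar>)"
    by (rule order_trans[OF norm_sum]) (simp add: norm_mult)
  moreover have "cmod (1 / complex_of_nat N) = 1 / real N"
    by (simp add: norm_divide)
  ultimately show ?thesis unfolding phi_check_def mu_bar_def norm_mult
    by (metis mult_left_mono divide_nonneg_nonneg of_nat_0_le_iff zero_le_one)
qed




lemma rw_nonneg[simp]: "rw a g k \<ge> 0" using rw_pos[of a g k] by simp

lemma per_m:
  fixes G a :: "int^'d::finite \<Rightarrow> complex" and \<gamma> :: "real^'d"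
  assumes K: "finite K" and al: "\<alpha> > 0" and ga: "\<And>j. \<gamma>$j > 0"
    and sm: "(\<lambda>k. rw \<alpha> \<gamma> k * (cmod (G k))^2) summable_on UNIV"
    and amu: "\<And>k. norm (a k) \<le> mu"
  shows "rw \<alpha> \<gamma> m * (cmod (\<Sum>k\<in>K. a k * G (m+k)))^2
     \<le> mu^2 * (\<Prod>j\<in>UNIV. max 1 (2 powr (2*\<alpha>) * \<gamma>$j)) * (\<Sum>k\<in>K. rw \<alpha> \<gamma> k)
        * (\<Sum>\<^sub>\<infinity>k. rw \<alpha> \<gamma> k * (cmod (G k))^2)"
proof -
  define Cc where "Cc = (\<Prod>j\<in>UNIV. max 1 (2 powr (2*\<alpha>) * \<gamma>$j))"
  define S where "S = (\<Sum>\<^sub>\<infinity>k. rw \<alpha> \<gamma> k * (cmod (G k))^2)"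
  define A where "A k = cmod (G (m+k))" for k
  define s where "s k = sqrt (rw \<alpha> \<gamma> k)" for k
  have Cc0: "Cc \<ge> 0" unfolding Cc_def by (intro prod_nonneg) auto
  have mu0: "mu \<ge> 0" using amu[of 0] norm_ge_zero order_trans by blast
  have s0: "s k \<ge> 0" for k unfolding s_def by simp
  have A0: "A k \<ge> 0" for k unfolding A_def by simp
  have h1: "cmod (\<Sum>k\<in>K. a k * G (m+k)) \<le> mu * (\<Sum>k\<in>K. A k)"
    unfolding sum_distrib_left A_def
    by (rule order_trans[OF norm_sum], rule sum_mono) (simp add: norm_mult mult_right_mono amu)
  have sle: "s m \<le> sqrt Cc * (s k * s (m+k))" for k
  proof -
    have "rw \<alpha> \<gamma> m \<le> Cc * (rw \<alpha> \<gamma> k * rw \<alpha> \<gamma> (m+k))"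
      using rw_submult[OF al ga, of m k] unfolding Cc_def by (simp add: mult_ac)
    then have "sqrt (rw \<alpha> \<gamma> m) \<le> sqrt (Cc * (rw \<alpha> \<gamma> k * rw \<alpha> \<gamma> (m+k)))"
      by (rule real_sqrt_le_mono)
    then show ?thesis unfolding s_def by (simp add: real_sqrt_mult)
  qed
  define T where "T = (\<Sum>k\<in>K. s k * (s (m+k) * A k))"
  have h2: "s m * (\<Sum>k\<in>K. A k) \<le> sqrt Cc * T"
    unfolding sum_distrib_left T_def
  proof (rule sum_mono)
    fix k assume "k \<in> K"
    have "s m * A k \<le> (sqrt Cc * (s k * s (m+k))) * A k"
      by (rule mult_right_mono[OF sle A0])
    then show "s m * A k \<le> sqrt Cc * (s k * (s (m + k) * A k))" by (simp add: mult_ac)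
  qed
  have h4: "(\<Sum>k\<in>K. (s (m+k) * A k)^2) \<le> S"
  proof -
    have "(\<Sum>k\<in>K. (s (m+k) * A k)^2) = (\<Sum>k\<in>K. rw \<alpha> \<gamma> (m+k) * (cmod (G (m+k)))^2)"
      unfolding s_def A_def using rw_pos[of \<alpha> \<gamma>] by (simp add: power_mult_distrib less_imp_le)
    also have "\<dots> = (\<Sum>j\<in>(\<lambda>k. m+k) ` K. rw \<alpha> \<gamma> j * (cmod (G j))^2)"
      by (subst sum.reindex) (auto simp: inj_on_def)
    also have "\<dots> \<le> S" unfolding S_def
      by (rule finite_sum_le_infsum[OF sm]) (use K rw_pos in \<open>auto intro: less_imp_le\<close>)
    finally show ?thesis .
  qed
  have h3: "T^2 \<le> (\<Sum>k\<in>K. rw \<alpha> \<gamma> k) * S"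
  proof -
    have "T^2 \<le> (\<Sum>k\<in>K. (s k)^2) * (\<Sum>k\<in>K. (s (m+k) * A k)^2)"
      unfolding T_def by (rule Cauchy_Schwarz_ineq_sum)
    also have "(\<Sum>k\<in>K. (s k)^2) = (\<Sum>k\<in>K. rw \<alpha> \<gamma> k)"
      unfolding s_def using rw_pos[of \<alpha> \<gamma>] by (simp add: less_imp_le)
    also have "(\<Sum>k\<in>K. rw \<alpha> \<gamma> k) * (\<Sum>k\<in>K. (s (m+k) * A k)^2) \<le> (\<Sum>k\<in>K. rw \<alpha> \<gamma> k) * S"
      by (rule mult_left_mono[OF h4]) (use rw_pos in \<open>auto intro: sum_nonneg less_imp_le\<close>)
    finally show ?thesis .
  qed
  have T0: "T \<ge> 0" unfolding T_def using s0 A0 by (intro sum_nonneg mult_nonneg_nonneg) auto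
  have "rw \<alpha> \<gamma> m * (cmod (\<Sum>k\<in>K. a k * G (m+k)))^2 = (s m * cmod (\<Sum>k\<in>K. a k * G (m+k)))^2"
    unfolding s_def using rw_pos[of \<alpha> \<gamma> m] by (simp add: power_mult_distrib)
  also have "\<dots> \<le> (s m * (mu * (\<Sum>k\<in>K. A k)))^2"
    by (intro power_mono mult_left_mono h1 s0 mult_nonneg_nonneg) simp_all
  also have "\<dots> = mu^2 * (s m * (\<Sum>k\<in>K. A k))^2" by (simp add: power_mult_distrib mult_ac)
  also have "\<dots> \<le> mu^2 * (sqrt Cc * T)^2"
    by (intro mult_left_mono power_mono h2) (use s0 A0 in \<open>auto intro: sum_nonneg mult_nonneg_nonneg\<close>)
  also have "\<dots> = mu^2 * Cc * T^2" using Cc0 by (simp add: power_mult_distrib)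
  also have "\<dots> \<le> mu^2 * Cc * ((\<Sum>k\<in>K. rw \<alpha> \<gamma> k) * S)"
    by (intro mult_left_mono h3) (use Cc0 in auto)
  finally show ?thesis unfolding Cc_def S_def by (simp add: mult_ac)
qed




lemma rzeta_nonneg: "s > 1 \<Longrightarrow> rzeta s \<ge> 0"
  using has_sum_nonneg[OF rzeta_has_sum] by simp

lemma zeta_sqrt:
  assumes "\<delta> > 0"
  shows "zeta_const \<delta> d = sqrt ((1 + 2 * rzeta (1 + 2*\<delta>)) ^ d)"
proof -
  define x where "x = 1 + 2 * rzeta (1 + 2*\<delta>)"
  have x: "x > 0" unfolding x_def using rzeta_nonneg[of "1+2*\<delta>"] assms by simp
  have "sqrt (x ^ d) = (x powr real d) powr (1/2)"
    using x by (simp add: powr_realpow powr_half_sqrt)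
  also have "\<dots> = x powr (real d / 2)" by (simp add: powr_powr)
  finally show ?thesis unfolding zeta_const_def x_def by simp
qed

theorem lemma3p6:
  fixes \<alpha> :: real and \<gamma> :: "real^('d::{finite,linorder})"
    and N :: nat and xs :: "nat \<Rightarrow> real^('d::{finite,linorder})" and c :: "nat \<Rightarrow> real"
    and K :: "(int^('d::{finite,linorder})) set" and g :: "real^('d::{finite,linorder}) \<Rightarrow> complex"
  assumes "\<alpha> > 1"
    and "\<And>j. 0 < \<gamma>$j \<and> \<gamma>$j \<le> 1"
    and "\<And>i j. i \<le> j \<Longrightarrow> \<gamma>$j \<le> \<gamma>$i"
    and "\<And>n. n \<in> {1..N} \<Longrightarrow> xs n \<in> unit_cube"
    and "finite K"
    and "g \<in> korobov_space \<alpha> \<gamma>"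
  shows "\<forall>\<delta>. 0 < \<delta> \<and> \<delta> < \<alpha> - 1 \<longrightarrow>
     (\<lambda>x. g x * phiK K N xs c x) \<in> korobov_space (\<alpha> - 1/2 - \<delta>) \<gamma> \<and>
     korobov_norm (\<alpha> - 1/2 - \<delta>) \<gamma> (\<lambda>x. g x * phiK K N xs c x)
       \<le> korobov_norm \<alpha> \<gamma> g * sqrt (\<Sum>k\<in>K. rw \<alpha> \<gamma> k)
         * c_const \<alpha> \<gamma> * zeta_const \<delta> CARD('d::{finite,linorder}) * mu_bar N c"
proof (intro allI impI)
  fix \<delta> :: real
  assume d: "0 < \<delta> \<and> \<delta> < \<alpha> - 1"
  define \<beta> where "\<beta> = \<alpha> - 1/2 - \<delta>"
  define s where "s = 1 + 2*\<delta>"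
  have s1: "s > 1" using d by (simp add: s_def)
  have al: "\<alpha> > 0" using assms(1) by simp
  have ga: "\<And>j. \<gamma>$j > 0" using assms(2) by simp
  have gL2: "g \<in> L2_cube" and smg: "(\<lambda>k. rw \<alpha> \<gamma> k * (cmod (fourier_coeff g k))^2) summable_on UNIV"
    using assms(6) by (simp_all add: korobov_space_def)
  define h where "h = (\<lambda>x. g x * phiK K N xs c x)"
  define mu where "mu = mu_bar N c"
  define Cc where "Cc = (\<Prod>j\<in>UNIV. max 1 (2 powr (2*\<alpha>) * \<gamma>$j))"
  define SK where "SK = (\<Sum>k\<in>K. rw \<alpha> \<gamma> k)"
  define S where "S = (\<Sum>\<^sub>\<infinity>k. rw \<alpha> \<gamma> k * (cmod (fourier_coeff g k))^2)"
  define C where "C = mu^2 * Cc * SK * S"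
  define w where "w = (\<lambda>m::int^('d::{finite,linorder}). \<Prod>j\<in>UNIV. rho s (m$j))"
  define W where "W = (1 + 2 * rzeta s) ^ CARD('d)"
  have hL2: "h \<in> L2_cube" unfolding h_def by (rule L2_prod[OF gL2])
  have H: "fourier_coeff h m = (\<Sum>k\<in>K. phi_check N xs c k * fourier_coeff g (m+k))" for m
    unfolding h_def by (rule fourier_prod[OF gL2 assms(5)])
  have w0: "w m \<ge> 0" for m unfolding w_def by (intro prod_nonneg) (simp add: rho_nonneg)
  have wsum: "(w has_sum W) UNIV" unfolding w_def W_def by (rule w_has_sum[OF s1])
  have Cwsum: "((\<lambda>m. C * w m) has_sum (C * W)) UNIV" by (rule has_sum_cmult_right[OF wsum])
  have bound: "rw \<beta> \<gamma> m * (cmod (fourier_coeff h m))^2 \<le> C * w m" for m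
  proof -
    have "rw \<beta> \<gamma> m * (cmod (fourier_coeff h m))^2 \<le> (rw \<alpha> \<gamma> m * w m) * (cmod (fourier_coeff h m))^2"
      unfolding \<beta>_def w_def s_def by (intro mult_right_mono rw_beta) (use assms(1,2) d in auto)
    also have "\<dots> = w m * (rw \<alpha> \<gamma> m * (cmod (fourier_coeff h m))^2)" by (simp add: mult_ac)
    also have "\<dots> \<le> w m * C"
      unfolding H C_def mu_def Cc_def SK_def S_def
      by (intro mult_left_mono w0 per_m[OF assms(5) al ga smg] phi_check_bound)
    finally show ?thesis by (simp add: mult_ac)
  qed
  have nn: "0 \<le> rw \<beta> \<gamma> m * (cmod (fourier_coeff h m))^2" for m by simp
  have smh: "(\<lambda>m. rw \<beta> \<gamma> m * (cmod (fourier_coeff h m))^2) summable_on UNIV"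
    by (rule summable_on_comparison_test[OF has_sum_imp_summable[OF Cwsum] bound nn])
  have le: "(\<Sum>\<^sub>\<infinity>m. rw \<beta> \<gamma> m * (cmod (fourier_coeff h m))^2) \<le> C * W"
    using infsum_mono[OF smh has_sum_imp_summable[OF Cwsum] bound] infsumI[OF Cwsum] by simp
  have mu0: "mu \<ge> 0" unfolding mu_def mu_bar_def by (intro mult_nonneg_nonneg sum_nonneg) auto
  have Cc0: "Cc \<ge> 0" unfolding Cc_def by (intro prod_nonneg) auto
  have SK0: "SK \<ge> 0" unfolding SK_def by (intro sum_nonneg) simp
  have S0: "S \<ge> 0" unfolding S_def by (intro infsum_nonneg) simp
  have W0: "W \<ge> 0" unfolding W_def using rzeta_nonneg[OF s1] by simp
  have "korobov_norm \<beta> \<gamma> h \<le> sqrt (C * W)"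
    unfolding korobov_norm_def by (rule real_sqrt_le_mono[OF le])
  also have "\<dots> = sqrt S * sqrt SK * sqrt Cc * sqrt W * mu"
    unfolding C_def using mu0 by (simp add: real_sqrt_mult)
  also have "\<dots> = korobov_norm \<alpha> \<gamma> g * sqrt (\<Sum>k\<in>K. rw \<alpha> \<gamma> k)
         * c_const \<alpha> \<gamma> * zeta_const \<delta> CARD('d) * mu_bar N c"
    unfolding korobov_norm_def S_def SK_def c_const_def Cc_def zeta_sqrt[OF conjunct1[OF d]] W_def s_def mu_def
    by simp
  finally have "korobov_norm \<beta> \<gamma> h \<le> korobov_norm \<alpha> \<gamma> g * sqrt (\<Sum>k\<in>K. rw \<alpha> \<gamma> k)
         * c_const \<alpha> \<gamma> * zeta_const \<delta> CARD('d) * mu_bar N c" .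
  moreover have "h \<in> korobov_space \<beta> \<gamma>" using hL2 smh by (simp add: korobov_space_def)
  ultimately show "(\<lambda>x. g x * phiK K N xs c x) \<in> korobov_space (\<alpha> - 1/2 - \<delta>) \<gamma> \<and>
     korobov_norm (\<alpha> - 1/2 - \<delta>) \<gamma> (\<lambda>x. g x * phiK K N xs c x)
       \<le> korobov_norm \<alpha> \<gamma> g * sqrt (\<Sum>k\<in>K. rw \<alpha> \<gamma> k)
         * c_const \<alpha> \<gamma> * zeta_const \<delta> CARD('d::{finite,linorder}) * mu_bar N c"
    unfolding h_def \<beta>_def by simp
qed


end
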